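(* Let $0\le t\le 1$ and $u>0$, and let $D=\mathrm{DASEP}(3,2,2)$ with stationary distribution $\mathrm{Pd}$. Then the following are equivalent: (i) $t=1$; (ii) for every partition $\lambda$ with $\lambda_1\le 2$ and exactly $2$ nonzero parts (i.e. $\lambda\in\{(1,1,0),(2,1,0),(2,2,0)\}$) and all $\mu,\nu\in S_3(\lambda)$, $$\frac{\Pr_\lambda(\mu)}{\Pr_\lambda(\nu)}=\frac{\mathrm{Pd}(\mu)}{\mathrm{Pd}(\nu)}.$$
   Context: For a partition $\lambda=(\lambda_1\ge\dots\ge\lambda_n\ge 0)$ of nonnegative integers, $S_n(\lambda)$ denotes the set of all distinct rearrangements of $\lambda$, viewed as words $(\mu_1,\dots,\mu_n)$ whose positions $1,\dots,n$ lie on a circle. Fix $0\le t\le 1$. ASEP($\lambda$) is the Markov chain on $S_n(\lambda)$ with transition probabilities $P_{\mu,\nu}$ defined as follows. If $\mu$ has entries $i\ne j$ in adjacent positions $k,k+1$ ($1\le k\le n-1$) and $\nu$ is obtained from $\mu$ by swapping them, then $P_{\mu,\nu}=t/n$ if $i>j$ and $P_{\mu,\nu}=1/n$ if $i<j$. If $\mu=(i,\mu_2,\dots,\mu_{n-1},j)$ with $i\ne j$ and $\nu=(j,\mu_2,\dots,\mu_{n-1},i)$, then $P_{\mu,\nu}=t/n$ if $j>i$ and $P_{\mu,\nu}=1/n$ if $i>j$. All other off-diagonal transition probabilities are $0$, and the diagonal entries are chosen so that each row sums to $1$. $\Pr_\lambda$ denotes the stationary distribution of ASEP($\lambda$). Fix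 also $u>0$. For positive integers $n,p,q$ with $n>q$, DASEP$(n,p,q)$ is the Markov chain on the set of words in $\{0,1,\dots,p\}^n$ with exactly $q$ nonzero entries (equivalently, the union of $S_n(\lambda)$ over partitions $\lambda$ with $\lambda_1\le p$ and exactly $q$ nonzero parts). Its transition probabilities are as follows. The two swap rules of ASEP apply, with probabilities $t/(3n)$ and $1/(3n)$ in place of $t/n$ and $1/n$. Replacing a single entry $i$ with $1\le i\le p-1$ by $i+1$ has probability $u/(3n)$. Replacing a single entry $i+1$ with $i\ge 1$ by $i$ has probability $1/(3n)$. All other off-diagonal transition probabilities are $0$, and the diagonal entries make each row sum to $1$. $\mathrm{Pd}$ denotes the stationary distribution of the DASEP. *)

theory Defs
  imports Complex_Main "HOL-Library.Multiset"
begin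

text \<open>Words are lists of naturals; position k (1-based in the paper) is list index k-1.\<close>

definition swap_at :: "nat list \<Rightarrow> nat \<Rightarrow> nat \<Rightarrow> nat list" where
  "swap_at w a b = w[a := w ! b, b := w ! a]"

text \<open>Off-diagonal swap probabilities with weights a (for the t-moves) and b (for the 1-moves):
  adjacent swaps at positions k,k+1 (indices k-1,k, 1 \<le> k \<le> n-1) and the wrap-around swap
  of positions 1 and n.  For ASEP a = t/n, b = 1/n; for DASEP a = t/(3n), b = 1/(3n).
  (For n \<ge> 3 all these moves lead to distinct words, so at most one summand is nonzero.)\<close>
definition swap_rate :: "real \<Rightarrow> real \<Rightarrow> nat \<Rightarrow> nat list \<Rightarrow> nat list \<Rightarrow> real" where
  "swap_rate a b n \<mu> \<nu> =
     (\<Sum>k\<in>{1..n-1}.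
        if \<mu> ! (k-1) \<noteq> \<mu> ! k \<and> \<nu> = swap_at \<mu> (k-1) k
        then (if \<mu> ! (k-1) > \<mu> ! k then a else b) else 0)
   + (if \<mu> ! 0 \<noteq> \<mu> ! (n-1) \<and> \<nu> = swap_at \<mu> 0 (n-1)
      then (if \<mu> ! (n-1) > \<mu> ! 0 then a else b) else 0)"

definition chain_P :: "nat list set \<Rightarrow> (nat list \<Rightarrow> nat list \<Rightarrow> real) \<Rightarrow> nat list \<Rightarrow> nat list \<Rightarrow> real" where
  "chain_P S off \<mu> \<nu> = (if \<mu> = \<nu> then 1 - (\<Sum>\<nu>'\<in>S - {\<mu>}. off \<mu> \<nu>') else off \<mu> \<nu>)"

definition S_n :: "nat list \<Rightarrow> nat list set" where
  "S_n lam = {\<mu>. mset \<mu> = mset lam}"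

definition is_partition :: "nat \<Rightarrow> nat list \<Rightarrow> bool" where
  "is_partition n lam \<longleftrightarrow> length lam = n \<and> sorted_wrt (\<ge>) lam"

definition ASEP_P :: "real \<Rightarrow> nat \<Rightarrow> nat list \<Rightarrow> nat list \<Rightarrow> nat list \<Rightarrow> real" where
  "ASEP_P t n lam = chain_P (S_n lam) (swap_rate (t / n) (1 / n) n)"

definition DASEP_states :: "nat \<Rightarrow> nat \<Rightarrow> nat \<Rightarrow> nat list set" where
  "DASEP_states n p q = {\<mu>. length \<mu> = n \<and> set \<mu> \<subseteq> {0..p} \<and> length (filter (\<lambda>x. x \<noteq> 0) \<mu>) = q}"

definition DASEP_off :: "real \<Rightarrow> real \<Rightarrow> nat \<Rightarrow> nat \<Rightarrow> nat list \<Rightarrow> nat list \<Rightarrow> real" where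
  "DASEP_off t u n p \<mu> \<nu> =
     swap_rate (t / (3 * n)) (1 / (3 * n)) n \<mu> \<nu>
   + (\<Sum>k\<in>{0..<n}.
        (if 1 \<le> \<mu> ! k \<and> \<mu> ! k \<le> p - 1 \<and> \<nu> = \<mu>[k := \<mu> ! k + 1] then u / (3 * n) else 0)
      + (if 2 \<le> \<mu> ! k \<and> \<nu> = \<mu>[k := \<mu> ! k - 1] then 1 / (3 * n) else 0))"

definition DASEP_P :: "real \<Rightarrow> real \<Rightarrow> nat \<Rightarrow> nat \<Rightarrow> nat \<Rightarrow> nat list \<Rightarrow> nat list \<Rightarrow> real" where
  "DASEP_P t u n p q = chain_P (DASEP_states n p q) (DASEP_off t u n p)"

definition stationary :: "nat list set \<Rightarrow> (nat list \<Rightarrow> nat list \<Rightarrow> real) \<Rightarrow> (nat list \<Rightarrow> real) \<Rightarrow> bool" where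
  "stationary S P \<pi> \<longleftrightarrow> (\<forall>\<mu>\<in>S. \<pi> \<mu> \<ge> 0) \<and> (\<Sum>\<mu>\<in>S. \<pi> \<mu>) = 1 \<and>
     (\<forall>\<nu>\<in>S. (\<Sum>\<mu>\<in>S. \<pi> \<mu> * P \<mu> \<nu>) = \<pi> \<nu>)"

end

theory Submission
  imports Defs
begin


definition bal :: "nat list set \<Rightarrow> (nat list \<Rightarrow> nat list \<Rightarrow> real) \<Rightarrow> (nat list \<Rightarrow> real) \<Rightarrow> nat list \<Rightarrow> bool" where
"bal S off w \<nu> \<longleftrightarrow> (\<Sum>\<mu>\<in>S-{\<nu>}. w \<mu> * off \<mu> \<nu>) = w \<nu> * (\<Sum>\<nu>'\<in>S-{\<nu>}. off \<nu> \<nu>')"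

lemma stat_bal:
  assumes "finite S" "stationary S (chain_P S off) \<pi>" "\<nu> \<in> S"
  shows "bal S off \<pi> \<nu>"
proof -
  have h1: "(\<Sum>\<mu>\<in>S. \<pi> \<mu> * chain_P S off \<mu> \<nu>) = \<pi> \<nu>" using assms(2,3) by (auto simp: stationary_def)
  have h2: "(\<Sum>\<mu>\<in>S. \<pi> \<mu> * chain_P S off \<mu> \<nu>) = \<pi> \<nu> * chain_P S off \<nu> \<nu> + (\<Sum>\<mu>\<in>S-{\<nu>}. \<pi> \<mu> * chain_P S off \<mu> \<nu>)"
    using assms(1,3) by (simp add: sum.remove)
  have h3: "(\<Sum>\<mu>\<in>S-{\<nu>}. \<pi> \<mu> * chain_P S off \<mu> \<nu>) = (\<Sum>\<mu>\<in>S-{\<nu>}. \<pi> \<mu> * off \<mu> \<nu>)"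
    by (rule sum.cong) (auto simp: chain_P_def)
  have h4: "chain_P S off \<nu> \<nu> = 1 - (\<Sum>\<nu>'\<in>S-{\<nu>}. off \<nu> \<nu>')" by (simp add: chain_P_def)
  show ?thesis using h1 h2 h3 h4 unfolding bal_def by (simp add: algebra_simps)
qed

lemma bal_lin:
  assumes "bal S off \<pi> \<nu>" "bal S off \<sigma> \<nu>"
  shows "bal S off (\<lambda>\<mu>. \<pi> \<mu> - c * \<sigma> \<mu>) \<nu>"
proof -
  have "(\<Sum>\<mu>\<in>S-{\<nu>}. (\<pi> \<mu> - c * \<sigma> \<mu>) * off \<mu> \<nu>)
      = (\<Sum>\<mu>\<in>S-{\<nu>}. \<pi> \<mu> * off \<mu> \<nu>) - c * (\<Sum>\<mu>\<in>S-{\<nu>}. \<sigma> \<mu> * off \<mu> \<nu>)"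
    by (simp add: left_diff_distrib sum_subtractf sum_distrib_left mult.assoc)
  then show ?thesis using assms unfolding bal_def by (simp add: algebra_simps)
qed

lemma prop_zero:
  assumes "finite S" "bal S off w \<nu>" "\<forall>\<mu>\<in>S. w \<mu> \<ge> 0"
    "\<forall>\<mu>\<in>S. \<forall>\<nu>\<in>S. \<mu> \<noteq> \<nu> \<longrightarrow> off \<mu> \<nu> \<ge> 0"
    "\<nu> \<in> S" "w \<nu> = 0" "\<mu> \<in> S" "\<mu> \<noteq> \<nu>" "off \<mu> \<nu> > 0"
  shows "w \<mu> = 0"
proof -
  have s0: "(\<Sum>\<mu>\<in>S-{\<nu>}. w \<mu> * off \<mu> \<nu>) = 0" using assms(2,6) unfolding bal_def by simp
  have nn: "\<forall>x\<in>S-{\<nu>}. 0 \<le> w x * off x \<nu>" using assms(3,4,5) by auto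
  have "w \<mu> * off \<mu> \<nu> = 0" using s0 nn assms(1,7,8) sum_nonneg_eq_0_iff[of "S-{\<nu>}" "\<lambda>x. w x * off x \<nu>"] by auto
  then show ?thesis using assms(9) by simp
qed

lemma walk_zero:
  assumes "finite S" "\<forall>\<nu>\<in>S. bal S off w \<nu>" "\<forall>\<mu>\<in>S. w \<mu> \<ge> 0"
    "\<forall>\<mu>\<in>S. \<forall>\<nu>\<in>S. \<mu> \<noteq> \<nu> \<longrightarrow> off \<mu> \<nu> \<ge> 0"
    "list_all (\<lambda>(x,y). x \<in> S \<and> y \<in> S \<and> x \<noteq> y \<and> off x y > 0) (zip L (tl L))"
    "L \<noteq> []" "hd L = last L" "S \<subseteq> set L" "\<nu>0 \<in> S" "w \<nu>0 = 0"
  shows "\<forall>x\<in>S. w x = 0"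
proof -
  have edge: "L!i \<in> S \<and> L!Suc i \<in> S \<and> L!i \<noteq> L!Suc i \<and> off (L!i) (L!Suc i) > 0" if "Suc i < length L" for i
  proof -
    have "i < length (zip L (tl L))" using that by simp
    then have "(\<lambda>(x,y). x \<in> S \<and> y \<in> S \<and> x \<noteq> y \<and> off x y > 0) (zip L (tl L) ! i)"
      using assms(5) by (simp add: list_all_length)
    then show ?thesis using that by (simp add: nth_tl)
  qed
  have bk: "\<forall>i\<le>j. w (L!i) = 0" if "j < length L" "w (L!j) = 0" for j
    using that
  proof (induction j)
    case 0 then show ?case by simp
  next
    case (Suc j)
    have e: "L!j \<in> S \<and> L!Suc j \<in> S \<and> L!j \<noteq> L!Suc j \<and> off (L!j) (L!Suc j) > 0" using edge Suc.prems(1) by blast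
    have "w (L!j) = 0"
      using prop_zero[OF assms(1) _ assms(3) assms(4), of "L!Suc j" "L!j"] e assms(2) Suc.prems(2) by auto
    then have "\<forall>i\<le>j. w (L!i) = 0" using Suc.IH Suc.prems(1) by simp
    then show ?case using Suc.prems(2) le_Suc_eq by auto
  qed
  obtain j where j: "j < length L" "L!j = \<nu>0" using assms(8,9) by (metis in_set_conv_nth subsetD)
  have "w (L!0) = 0" using bk[OF j(1)] j assms(10) by simp
  then have "w (L!(length L - 1)) = 0" using assms(6,7) by (simp add: hd_conv_nth last_conv_nth)
  then have "\<forall>i\<le>length L - 1. w (L!i) = 0" using bk[of "length L - 1"] assms(6) by simp
  then show ?thesis using assms(8) by (force simp: in_set_conv_nth)
qed

lemma unique:
  assumes "finite S" "S \<noteq> {}" "\<forall>\<nu>\<in>S. bal S off \<pi> \<nu>" "\<forall>\<nu>\<in>S. bal S off \<sigma> \<nu>"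
    "\<forall>\<mu>\<in>S. \<pi> \<mu> \<ge> 0" "sum \<pi> S = 1" "\<forall>\<mu>\<in>S. \<sigma> \<mu> > 0"
    "\<forall>\<mu>\<in>S. \<forall>\<nu>\<in>S. \<mu> \<noteq> \<nu> \<longrightarrow> off \<mu> \<nu> \<ge> 0"
    "list_all (\<lambda>(x,y). x \<in> S \<and> y \<in> S \<and> x \<noteq> y \<and> off x y > 0) (zip L (tl L))"
    "L \<noteq> []" "hd L = last L" "S \<subseteq> set L"
  shows "\<exists>c>0. \<forall>\<mu>\<in>S. \<pi> \<mu> = c * \<sigma> \<mu>"
proof -
  define c where "c = Min ((\<lambda>\<mu>. \<pi> \<mu> / \<sigma> \<mu>) ` S)"
  have "c \<in> (\<lambda>\<mu>. \<pi> \<mu> / \<sigma> \<mu>) ` S" unfolding c_def using assms(1,2) by (intro Min_in) auto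
  then obtain \<nu>0 where n0: "\<nu>0 \<in> S" "c = \<pi> \<nu>0 / \<sigma> \<nu>0" by auto
  have cle: "c \<le> \<pi> \<mu> / \<sigma> \<mu>" if "\<mu> \<in> S" for \<mu> unfolding c_def using assms(1) that by (intro Min_le) auto
  define w where "w = (\<lambda>\<mu>. \<pi> \<mu> - c * \<sigma> \<mu>)"
  have wnn: "\<forall>\<mu>\<in>S. w \<mu> \<ge> 0"
  proof
    fix \<mu> assume m: "\<mu> \<in> S"
    have "c \<le> \<pi> \<mu> / \<sigma> \<mu>" using cle m .
    then have "c * \<sigma> \<mu> \<le> \<pi> \<mu>" using assms(7) m by (simp add: pos_le_divide_eq)
    then show "w \<mu> \<ge> 0" unfolding w_def by simp
  qed
  have w0: "w \<nu>0 = 0"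
  proof -
    have "\<sigma> \<nu>0 > 0" using n0 assms(7) by simp
    then show ?thesis unfolding w_def using n0 by simp
  qed
  have wb: "\<forall>\<nu>\<in>S. bal S off w \<nu>" unfolding w_def using assms(3,4) bal_lin by blast
  have z: "\<forall>x\<in>S. w x = 0" using walk_zero[OF assms(1) wb wnn assms(8) assms(9,10,11,12) n0(1) w0] .
  then have eq: "\<forall>\<mu>\<in>S. \<pi> \<mu> = c * \<sigma> \<mu>" unfolding w_def by simp
  have "c \<ge> 0" using n0 assms(5,7) by (simp add: divide_nonneg_pos)
  moreover have "c \<noteq> 0"
  proof
    assume "c = 0"
    then have "sum \<pi> S = 0" using eq by simp
    then show False using assms(6) by simp
  qed
  ultimately show ?thesis using eq by (intro exI[of _ c]) auto
qed



definition SD :: "nat list set" where "SD = {[1,1,0],[0,1,1],[1,0,1],[2,2,0],[0,2,2],[2,0,2],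
  [2,1,0],[1,0,2],[0,2,1],[2,0,1],[0,1,2],[1,2,0]}"
lemma DS: "DASEP_states 3 2 2 = SD"
proof
  show "SD \<subseteq> DASEP_states 3 2 2" unfolding SD_def DASEP_states_def by simp
  show "DASEP_states 3 2 2 \<subseteq> SD"
  proof
    fix \<mu> assume m: "\<mu> \<in> DASEP_states 3 2 2"
    then have l: "length \<mu> = 3" by (simp add: DASEP_states_def)
    then obtain a b c where abc: "\<mu> = [a,b,c]" by (auto simp: length_Suc_conv numeral_3_eq_3)
    have f: "length (filter (\<lambda>x. x \<noteq> 0) [a,b,c]) = 2" using m abc by (simp add: DASEP_states_def)
    have "a \<le> 2" "b \<le> 2" "c \<le> 2" using m abc by (auto simp: DASEP_states_def)
    then have "a = 0 \<or> a = 1 \<or> a = 2" "b = 0 \<or> b = 1 \<or> b = 2" "c = 0 \<or> c = 1 \<or> c = 2" by auto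
    then show "\<mu> \<in> SD" using f unfolding abc SD_def by (elim disjE) simp_all
  qed
qed

lemma Sn_char:
  assumes "\<mu> \<in> S_n lam" "length lam = 3"
  shows "\<exists>a b c. \<mu> = [a,b,c] \<and> a \<in> set lam \<and> b \<in> set lam \<and> c \<in> set lam"
proof -
  have me: "mset \<mu> = mset lam" using assms(1) by (simp add: S_n_def)
  then have "length \<mu> = 3" using assms(2) by (metis size_mset)
  then obtain a b c where abc: "\<mu> = [a,b,c]" by (auto simp: length_Suc_conv numeral_3_eq_3)
  have "set \<mu> = set lam" using me by (metis set_mset_mset)
  then show ?thesis using abc by auto
qed


lemma msum: "mset xs = mset ys \<Longrightarrow> sum_list (map f xs) = (sum_list (map f ys) :: nat)"
  by (metis mset_map sum_mset_sum_list)

definition S110 :: "nat list set" where "S110 = {[1,1,0],[0,1,1],[1,0,1]}"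
definition S220 :: "nat list set" where "S220 = {[2,2,0],[0,2,2],[2,0,2]}"
definition S210 :: "nat list set" where "S210 = {[2,1,0],[1,0,2],[0,2,1],[2,0,1],[0,1,2],[1,2,0]}"

lemma Sn110: "S_n [1,1,0] = S110"
proof
  show "S110 \<subseteq> S_n [1,1,0]" unfolding S110_def S_n_def by simp
  show "S_n [1,1,0] \<subseteq> S110"
  proof
    fix \<mu> assume m: "\<mu> \<in> S_n [1,1,0]"
    obtain a b c where abc: "\<mu> = [a,b,c]" "a = 1 \<or> a = 0" "b = 1 \<or> b = 0" "c = 1 \<or> c = 0" using Sn_char[OF m] by auto
    have me: "mset [a,b,c] = mset [1,1,0::nat]" using m abc(1) by (simp add: S_n_def)
    have s1: "a + b + c = 2" using msum[OF me, of "\<lambda>x. x"] by simp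
    from abc(2-4) show "\<mu> \<in> S110" using s1 unfolding abc(1) S110_def by (elim disjE) simp_all
  qed
qed

lemma Sn220: "S_n [2,2,0] = S220"
proof
  show "S220 \<subseteq> S_n [2,2,0]" unfolding S220_def S_n_def by simp
  show "S_n [2,2,0] \<subseteq> S220"
  proof
    fix \<mu> assume m: "\<mu> \<in> S_n [2,2,0]"
    obtain a b c where abc: "\<mu> = [a,b,c]" "a = 2 \<or> a = 0" "b = 2 \<or> b = 0" "c = 2 \<or> c = 0" using Sn_char[OF m] by auto
    have me: "mset [a,b,c] = mset [2,2,0::nat]" using m abc(1) by (simp add: S_n_def)
    have s1: "a + b + c = 4" using msum[OF me, of "\<lambda>x. x"] by simp
    from abc(2-4) show "\<mu> \<in> S220" using s1 unfolding abc(1) S220_def by (elim disjE) simp_all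
  qed
qed

lemma Sn210: "S_n [2,1,0] = S210"
proof
  show "S210 \<subseteq> S_n [2,1,0]" unfolding S210_def S_n_def by simp
  show "S_n [2,1,0] \<subseteq> S210"
  proof
    fix \<mu> assume m: "\<mu> \<in> S_n [2,1,0]"
    obtain a b c where abc: "\<mu> = [a,b,c]" "a = 2 \<or> a = 1 \<or> a = 0" "b = 2 \<or> b = 1 \<or> b = 0" "c = 2 \<or> c = 1 \<or> c = 0" using Sn_char[OF m] by auto
    have me: "mset [a,b,c] = mset [2,1,0::nat]" using m abc(1) by (simp add: S_n_def)
    have s1: "a + b + c = 3" using msum[OF me, of "\<lambda>x. x"] by simp
    have s2: "a*a + b*b + c*c = 5" using msum[OF me, of "\<lambda>x. x*x"] by simp
    from abc(2-4) show "\<mu> \<in> S210" using s1 s2 unfolding abc(1) S210_def by (elim disjE) simp_all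
  qed
qed



lemma e1: "{1..(3::nat)-1} = {1,2}" by auto
lemma e2: "{0..<(3::nat)} = {0,1,2}" by auto

definition sig :: "real \<Rightarrow> real \<Rightarrow> nat list \<Rightarrow> real" where
"sig t u \<mu> = (if \<mu> \<in> {[1,1,0],[0,1,1],[1,0,1]} then 3*t+4+u else
  if \<mu> \<in> {[2,2,0],[0,2,2],[2,0,2]} then u^2*(3*t+4+u) else
  if \<mu> \<in> {[2,1,0],[1,0,2],[0,2,1]} then u*(2*t+5+u) else u*(4*t+3+u))"

lemma balD0: "bal SD (DASEP_off t u 3 2) (sig t u) [1,1,0]"
  unfolding bal_def SD_def DASEP_off_def swap_rate_def e1 e2
  apply (simp add: swap_at_def sig_def insert_Diff_if)
  apply (simp add: field_simps power2_eq_square)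
  done

lemma balD1: "bal SD (DASEP_off t u 3 2) (sig t u) [0,1,1]"
  unfolding bal_def SD_def DASEP_off_def swap_rate_def e1 e2
  apply (simp add: swap_at_def sig_def insert_Diff_if)
  apply (simp add: field_simps power2_eq_square)
  done

lemma balD2: "bal SD (DASEP_off t u 3 2) (sig t u) [1,0,1]"
  unfolding bal_def SD_def DASEP_off_def swap_rate_def e1 e2
  apply (simp add: swap_at_def sig_def insert_Diff_if)
  apply (simp add: field_simps power2_eq_square)
  done

lemma balD3: "bal SD (DASEP_off t u 3 2) (sig t u) [2,2,0]"
  unfolding bal_def SD_def DASEP_off_def swap_rate_def e1 e2
  apply (simp add: swap_at_def sig_def insert_Diff_if)
  apply (simp add: field_simps power2_eq_square)
  done

lemma balD4: "bal SD (DASEP_off t u 3 2) (sig t u) [0,2,2]"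
  unfolding bal_def SD_def DASEP_off_def swap_rate_def e1 e2
  apply (simp add: swap_at_def sig_def insert_Diff_if)
  apply (simp add: field_simps power2_eq_square)
  done

lemma balD5: "bal SD (DASEP_off t u 3 2) (sig t u) [2,0,2]"
  unfolding bal_def SD_def DASEP_off_def swap_rate_def e1 e2
  apply (simp add: swap_at_def sig_def insert_Diff_if)
  apply (simp add: field_simps power2_eq_square)
  done

lemma balD6: "bal SD (DASEP_off t u 3 2) (sig t u) [2,1,0]"
  unfolding bal_def SD_def DASEP_off_def swap_rate_def e1 e2
  apply (simp add: swap_at_def sig_def insert_Diff_if)
  apply (simp add: field_simps power2_eq_square)
  done

lemma balD7: "bal SD (DASEP_off t u 3 2) (sig t u) [1,0,2]"
  unfolding bal_def SD_def DASEP_off_def swap_rate_def e1 e2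
  apply (simp add: swap_at_def sig_def insert_Diff_if)
  apply (simp add: field_simps power2_eq_square)
  done

lemma balD8: "bal SD (DASEP_off t u 3 2) (sig t u) [0,2,1]"
  unfolding bal_def SD_def DASEP_off_def swap_rate_def e1 e2
  apply (simp add: swap_at_def sig_def insert_Diff_if)
  apply (simp add: field_simps power2_eq_square)
  done

lemma balD9: "bal SD (DASEP_off t u 3 2) (sig t u) [2,0,1]"
  unfolding bal_def SD_def DASEP_off_def swap_rate_def e1 e2
  apply (simp add: swap_at_def sig_def insert_Diff_if)
  apply (simp add: field_simps power2_eq_square)
  done

lemma balD10: "bal SD (DASEP_off t u 3 2) (sig t u) [0,1,2]"
  unfolding bal_def SD_def DASEP_off_def swap_rate_def e1 e2
  apply (simp add: swap_at_def sig_def insert_Diff_if)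
  apply (simp add: field_simps power2_eq_square)
  done

lemma balD11: "bal SD (DASEP_off t u 3 2) (sig t u) [1,2,0]"
  unfolding bal_def SD_def DASEP_off_def swap_rate_def e1 e2
  apply (simp add: swap_at_def sig_def insert_Diff_if)
  apply (simp add: field_simps power2_eq_square)
  done

lemma balD: "\<forall>\<nu>\<in>SD. bal SD (DASEP_off t u 3 2) (sig t u) \<nu>"
  unfolding SD_def using balD0 balD1 balD2 balD3 balD4 balD5 balD6 balD7 balD8 balD9 balD10 balD11 by (simp add: SD_def)

definition sigA :: "real \<Rightarrow> nat list \<Rightarrow> real" where
"sigA t \<mu> = (if \<mu> \<in> {[2,1,0],[1,0,2],[0,2,1]} then t+2 else 2*t+1)"

lemma balA0: "bal S210 (swap_rate (t/3) (1/3) 3) (sigA t) [2,1,0]"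
  unfolding bal_def S210_def swap_rate_def e1
  apply (simp add: swap_at_def sigA_def insert_Diff_if)
  apply (simp add: field_simps)?
  done

lemma balA1: "bal S210 (swap_rate (t/3) (1/3) 3) (sigA t) [1,0,2]"
  unfolding bal_def S210_def swap_rate_def e1
  apply (simp add: swap_at_def sigA_def insert_Diff_if)
  apply (simp add: field_simps)?
  done

lemma balA2: "bal S210 (swap_rate (t/3) (1/3) 3) (sigA t) [0,2,1]"
  unfolding bal_def S210_def swap_rate_def e1
  apply (simp add: swap_at_def sigA_def insert_Diff_if)
  apply (simp add: field_simps)?
  done

lemma balA3: "bal S210 (swap_rate (t/3) (1/3) 3) (sigA t) [2,0,1]"
  unfolding bal_def S210_def swap_rate_def e1
  apply (simp add: swap_at_def sigA_def insert_Diff_if)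
  apply (simp add: field_simps)?
  done

lemma balA4: "bal S210 (swap_rate (t/3) (1/3) 3) (sigA t) [0,1,2]"
  unfolding bal_def S210_def swap_rate_def e1
  apply (simp add: swap_at_def sigA_def insert_Diff_if)
  apply (simp add: field_simps)?
  done

lemma balA5: "bal S210 (swap_rate (t/3) (1/3) 3) (sigA t) [1,2,0]"
  unfolding bal_def S210_def swap_rate_def e1
  apply (simp add: swap_at_def sigA_def insert_Diff_if)
  apply (simp add: field_simps)?
  done

lemma balA: "\<forall>\<nu>\<in>S210. bal S210 (swap_rate (t/3) (1/3) 3) (sigA t) \<nu>"
  using balA0 balA1 balA2 balA3 balA4 balA5 by (simp add: S210_def)

lemma bal1100: "bal S110 (swap_rate (t/3) (1/3) 3) (\<lambda>_. 1) [1,1,0]"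
  unfolding bal_def S110_def swap_rate_def e1
  apply (simp add: swap_at_def  insert_Diff_if)
  apply (simp add: field_simps)?
  done

lemma bal1101: "bal S110 (swap_rate (t/3) (1/3) 3) (\<lambda>_. 1) [0,1,1]"
  unfolding bal_def S110_def swap_rate_def e1
  apply (simp add: swap_at_def  insert_Diff_if)
  apply (simp add: field_simps)?
  done

lemma bal1102: "bal S110 (swap_rate (t/3) (1/3) 3) (\<lambda>_. 1) [1,0,1]"
  unfolding bal_def S110_def swap_rate_def e1
  apply (simp add: swap_at_def  insert_Diff_if)
  apply (simp add: field_simps)?
  done

lemma bal110: "\<forall>\<nu>\<in>S110. bal S110 (swap_rate (t/3) (1/3) 3) (\<lambda>_. 1) \<nu>"
  using bal1100 bal1101 bal1102 by (simp add: S110_def)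

lemma bal2200: "bal S220 (swap_rate (t/3) (1/3) 3) (\<lambda>_. 1) [2,2,0]"
  unfolding bal_def S220_def swap_rate_def e1
  apply (simp add: swap_at_def  insert_Diff_if)
  apply (simp add: field_simps)?
  done

lemma bal2201: "bal S220 (swap_rate (t/3) (1/3) 3) (\<lambda>_. 1) [0,2,2]"
  unfolding bal_def S220_def swap_rate_def e1
  apply (simp add: swap_at_def  insert_Diff_if)
  apply (simp add: field_simps)?
  done

lemma bal2202: "bal S220 (swap_rate (t/3) (1/3) 3) (\<lambda>_. 1) [2,0,2]"
  unfolding bal_def S220_def swap_rate_def e1
  apply (simp add: swap_at_def  insert_Diff_if)
  apply (simp add: field_simps)?
  done

lemma bal220: "\<forall>\<nu>\<in>S220. bal S220 (swap_rate (t/3) (1/3) 3) (\<lambda>_. 1) \<nu>"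
  using bal2200 bal2201 bal2202 by (simp add: S220_def)

lemma sr_nn: "a \<ge> 0 \<Longrightarrow> b \<ge> 0 \<Longrightarrow> swap_rate a b n \<mu> \<nu> \<ge> 0"
  unfolding swap_rate_def by (intro add_nonneg_nonneg sum_nonneg) auto

lemma off_nn: "t \<ge> 0 \<Longrightarrow> u \<ge> 0 \<Longrightarrow> DASEP_off t u n p \<mu> \<nu> \<ge> 0"
  unfolding DASEP_off_def by (intro add_nonneg_nonneg sum_nonneg sr_nn) auto

definition LD :: "nat list list" where
 "LD = [[1,1,0],[2,1,0],[2,2,0],[0,2,2],[2,0,2],[1,0,2],[1,2,0],[0,2,1],[2,0,1],[2,1,0],[0,1,2],[0,1,1],[1,0,1],[1,1,0]]"
definition LA :: "nat list list" where
 "LA = [[2,1,0],[0,1,2],[1,0,2],[1,2,0],[0,2,1],[2,0,1],[2,1,0]]"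
definition L110 :: "nat list list" where "L110 = [[1,1,0],[0,1,1],[1,0,1],[1,1,0]]"
definition L220 :: "nat list list" where "L220 = [[2,2,0],[0,2,2],[2,0,2],[2,2,0]]"

lemma walkD: "u > 0 \<Longrightarrow> list_all (\<lambda>(x,y). x \<in> SD \<and> y \<in> SD \<and> x \<noteq> y \<and> DASEP_off t u 3 2 x y > 0) (zip LD (tl LD))"
  unfolding LD_def SD_def DASEP_off_def swap_rate_def e1 e2
  by (simp add: swap_at_def)
lemma walkA: "list_all (\<lambda>(x,y). x \<in> S210 \<and> y \<in> S210 \<and> x \<noteq> y \<and> swap_rate (t/3) (1/3) 3 x y > 0) (zip LA (tl LA))"
  unfolding LA_def S210_def swap_rate_def e1
  by (simp add: swap_at_def)
lemma walk110: "list_all (\<lambda>(x,y). x \<in> S110 \<and> y \<in> S110 \<and> x \<noteq> y \<and> swap_rate (t/3) (1/3) 3 x y > 0) (zip L110 (tl L110))"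
  unfolding L110_def S110_def swap_rate_def e1
  by (simp add: swap_at_def)
lemma walk220: "list_all (\<lambda>(x,y). x \<in> S220 \<and> y \<in> S220 \<and> x \<noteq> y \<and> swap_rate (t/3) (1/3) 3 x y > 0) (zip L220 (tl L220))"
  unfolding L220_def S220_def swap_rate_def e1
  by (simp add: swap_at_def)




lemma lamcases:
  assumes "is_partition 3 lam" "\<forall>x\<in>set lam. x \<le> 2" "length (filter (\<lambda>x. x \<noteq> 0) lam) = 2"
  shows "lam = [1,1,0] \<or> lam = [2,1,0] \<or> lam = [2,2,0]"
proof -
  have "length lam = 3" using assms(1) by (simp add: is_partition_def)
  then obtain a b c where abc: "lam = [a,b,c]" by (auto simp: length_Suc_conv numeral_3_eq_3)
  have s: "b \<le> a" "c \<le> b" using assms(1) abc by (auto simp: is_partition_def)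
  have f: "length (filter (\<lambda>x. x \<noteq> 0) [a,b,c]) = 2" using assms(3) abc by simp
  have "a \<le> 2" "b \<le> 2" "c \<le> 2" using assms(2) abc by auto
  then have "a = 0 \<or> a = 1 \<or> a = 2" "b = 0 \<or> b = 1 \<or> b = 2" "c = 0 \<or> c = 1 \<or> c = 2" by auto
  then show ?thesis using f s unfolding abc by (elim disjE) simp_all
qed

theorem mainTheorem1:
  fixes t u :: real
    and Pr :: "nat list \<Rightarrow> nat list \<Rightarrow> real"
    and Pd :: "nat list \<Rightarrow> real"
  assumes "0 \<le> t" and "t \<le> 1" and "u > 0"
    and "stationary (DASEP_states 3 2 2) (DASEP_P t u 3 2 2) Pd"
    and "\<And>lam. is_partition 3 lam \<Longrightarrow> stationary (S_n lam) (ASEP_P t 3 lam) (Pr lam)"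
  shows "t = 1 \<longleftrightarrow>
    (\<forall>lam. is_partition 3 lam \<and> (\<forall>x\<in>set lam. x \<le> 2) \<and> length (filter (\<lambda>x. x \<noteq> 0) lam) = 2 \<longrightarrow>
       (\<forall>\<mu>\<in>S_n lam. \<forall>\<nu>\<in>S_n lam. Pr lam \<mu> / Pr lam \<nu> = Pd \<mu> / Pd \<nu>))"
proof -
  have p1: "3*t+4+u > 0" "2*t+5+u > 0" "4*t+3+u > 0" "t + 2 > 0" "2*t+1 > 0" using assms(1,3) by linarith+
  have up: "u^2 > 0" using assms(3) by simp
  have stD: "stationary SD (chain_P SD (DASEP_off t u 3 2)) Pd"
    using assms(4) by (simp add: DASEP_P_def DS)
  have finSD: "finite SD" by (simp add: SD_def)
  have "\<exists>c>0. \<forall>\<mu>\<in>SD. Pd \<mu> = c * sig t u \<mu>"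
  proof (rule unique[OF finSD _ _ balD _ _ _ _ walkD[OF assms(3)]])
    show "SD \<noteq> {}" by (simp add: SD_def)
    show "\<forall>\<nu>\<in>SD. bal SD (DASEP_off t u 3 2) Pd \<nu>" using stat_bal[OF finSD stD] by blast
    show "\<forall>\<mu>\<in>SD. 0 \<le> Pd \<mu>" "sum Pd SD = 1" using stD by (auto simp: stationary_def)
    show "\<forall>\<mu>\<in>SD. 0 < sig t u \<mu>" using p1 up assms(3) by (auto simp: SD_def sig_def)
    show "\<forall>\<mu>\<in>SD. \<forall>\<nu>\<in>SD. \<mu> \<noteq> \<nu> \<longrightarrow> 0 \<le> DASEP_off t u 3 2 \<mu> \<nu>"
      using off_nn assms(1,3) by auto
    show "LD \<noteq> []" "hd LD = last LD" "SD \<subseteq> set LD" by (auto simp: LD_def SD_def)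
  qed
  then obtain cd where cd: "cd > 0" "\<forall>\<mu>\<in>SD. Pd \<mu> = cd * sig t u \<mu>" by blast
  have stA: "stationary S210 (chain_P S210 (swap_rate (t/3) (1/3) 3)) (Pr [2,1,0])"
    using assms(5)[of "[2,1,0]"] unfolding ASEP_P_def Sn210 by (simp add: is_partition_def)
  have finA: "finite S210" by (simp add: S210_def)
  have "\<exists>c>0. \<forall>\<mu>\<in>S210. Pr [2,1,0] \<mu> = c * sigA t \<mu>"
  proof (rule unique[OF finA _ _ balA _ _ _ _ walkA])
    show "S210 \<noteq> {}" by (simp add: S210_def)
    show "\<forall>\<nu>\<in>S210. bal S210 (swap_rate (t/3) (1/3) 3) (Pr [2,1,0]) \<nu>" using stat_bal[OF finA stA] by blast
    show "\<forall>\<mu>\<in>S210. 0 \<le> Pr [2,1,0] \<mu>" "sum (Pr [2,1,0]) S210 = 1" using stA by (auto simp: stationary_def)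
    show "\<forall>\<mu>\<in>S210. 0 < sigA t \<mu>" using p1 by (auto simp: S210_def sigA_def)
    show "\<forall>\<mu>\<in>S210. \<forall>\<nu>\<in>S210. \<mu> \<noteq> \<nu> \<longrightarrow> 0 \<le> swap_rate (t/3) (1/3) 3 \<mu> \<nu>"
      using sr_nn assms(1) by auto
    show "LA \<noteq> []" "hd LA = last LA" "S210 \<subseteq> set LA" by (auto simp: LA_def S210_def)
  qed
  then obtain c3 where c3: "c3 > 0" "\<forall>\<mu>\<in>S210. Pr [2,1,0] \<mu> = c3 * sigA t \<mu>" by blast
  have st1: "stationary S110 (chain_P S110 (swap_rate (t/3) (1/3) 3)) (Pr [1,1,0])"
    using assms(5)[of "[1,1,0]"] unfolding ASEP_P_def Sn110 by (simp add: is_partition_def)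
  have fin1: "finite S110" by (simp add: S110_def)
  have "\<exists>c>0. \<forall>\<mu>\<in>S110. Pr [1,1,0] \<mu> = c * (\<lambda>_. 1) \<mu>"
  proof (rule unique[OF fin1 _ _ bal110 _ _ _ _ walk110])
    show "S110 \<noteq> {}" by (simp add: S110_def)
    show "\<forall>\<nu>\<in>S110. bal S110 (swap_rate (t/3) (1/3) 3) (Pr [1,1,0]) \<nu>" using stat_bal[OF fin1 st1] by blast
    show "\<forall>\<mu>\<in>S110. 0 \<le> Pr [1,1,0] \<mu>" "sum (Pr [1,1,0]) S110 = 1" using st1 by (auto simp: stationary_def)
    show "\<forall>\<mu>\<in>S110. (0::real) < 1" by simp
    show "\<forall>\<mu>\<in>S110. \<forall>\<nu>\<in>S110. \<mu> \<noteq> \<nu> \<longrightarrow> 0 \<le> swap_rate (t/3) (1/3) 3 \<mu> \<nu>"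
      using sr_nn assms(1) by auto
    show "L110 \<noteq> []" "hd L110 = last L110" "S110 \<subseteq> set L110" by (auto simp: L110_def S110_def)
  qed
  then obtain c1 where c1: "c1 > 0" "\<forall>\<mu>\<in>S110. Pr [1,1,0] \<mu> = c1" by auto
  have st2: "stationary S220 (chain_P S220 (swap_rate (t/3) (1/3) 3)) (Pr [2,2,0])"
    using assms(5)[of "[2,2,0]"] unfolding ASEP_P_def Sn220 by (simp add: is_partition_def)
  have fin2: "finite S220" by (simp add: S220_def)
  have "\<exists>c>0. \<forall>\<mu>\<in>S220. Pr [2,2,0] \<mu> = c * (\<lambda>_. 1) \<mu>"
  proof (rule unique[OF fin2 _ _ bal220 _ _ _ _ walk220])
    show "S220 \<noteq> {}" by (simp add: S220_def)
    show "\<forall>\<nu>\<in>S220. bal S220 (swap_rate (t/3) (1/3) 3) (Pr [2,2,0]) \<nu>" using stat_bal[OF fin2 st2] by blast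
    show "\<forall>\<mu>\<in>S220. 0 \<le> Pr [2,2,0] \<mu>" "sum (Pr [2,2,0]) S220 = 1" using st2 by (auto simp: stationary_def)
    show "\<forall>\<mu>\<in>S220. (0::real) < 1" by simp
    show "\<forall>\<mu>\<in>S220. \<forall>\<nu>\<in>S220. \<mu> \<noteq> \<nu> \<longrightarrow> 0 \<le> swap_rate (t/3) (1/3) 3 \<mu> \<nu>"
      using sr_nn assms(1) by auto
    show "L220 \<noteq> []" "hd L220 = last L220" "S220 \<subseteq> set L220" by (auto simp: L220_def S220_def)
  qed
  then obtain c2 where c2: "c2 > 0" "\<forall>\<mu>\<in>S220. Pr [2,2,0] \<mu> = c2" by auto
  have d110: "\<forall>\<mu>\<in>S110. Pd \<mu> = cd * (3*t+4+u)" using cd(2) by (auto simp: S110_def SD_def sig_def)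
  have d220: "\<forall>\<mu>\<in>S220. Pd \<mu> = cd * (u^2*(3*t+4+u))" using cd(2) by (auto simp: S220_def SD_def sig_def)
  have dA: "Pd [2,1,0] = cd * (u*(2*t+5+u))" "Pd [2,0,1] = cd * (u*(4*t+3+u))"
    using cd(2) by (auto simp: SD_def sig_def)
  have rA: "Pr [2,1,0] [2,1,0] = c3 * (t+2)" "Pr [2,1,0] [2,0,1] = c3 * (2*t+1)"
    using c3(2) by (auto simp: S210_def sigA_def)
  show ?thesis
  proof
    assume t1: "t = 1"
    have d210: "\<forall>\<mu>\<in>S210. Pd \<mu> = cd * (u*(7+u)) \<and> Pr [2,1,0] \<mu> = c3 * 3"
      using cd(2) c3(2) t1 by (auto simp: S210_def SD_def sig_def sigA_def)
    have K1: "cd * (3*t+4+u) > 0" "cd * (u^2*(3*t+4+u)) > 0" "cd * (u*(7+u)) > 0" "c3 * 3 > 0"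
      using cd(1) p1 up assms(3) c3(1) by simp_all
    show "\<forall>lam. is_partition 3 lam \<and> (\<forall>x\<in>set lam. x \<le> 2) \<and> length (filter (\<lambda>x. x \<noteq> 0) lam) = 2 \<longrightarrow>
       (\<forall>\<mu>\<in>S_n lam. \<forall>\<nu>\<in>S_n lam. Pr lam \<mu> / Pr lam \<nu> = Pd \<mu> / Pd \<nu>)"
    proof (intro allI impI ballI)
      fix lam \<mu> \<nu>
      assume h: "is_partition 3 lam \<and> (\<forall>x\<in>set lam. x \<le> 2) \<and> length (filter (\<lambda>x. x \<noteq> 0) lam) = 2"
        and m: "\<mu> \<in> S_n lam" and n: "\<nu> \<in> S_n lam"
      have "lam = [1,1,0] \<or> lam = [2,1,0] \<or> lam = [2,2,0]" using lamcases h by blast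
      then show "Pr lam \<mu> / Pr lam \<nu> = Pd \<mu> / Pd \<nu>"
      proof (elim disjE)
        assume l: "lam = [1,1,0]"
        have "\<mu> \<in> S110" "\<nu> \<in> S110" using m n unfolding l Sn110 by auto
        then show ?thesis unfolding l using d110 c1 K1(1) cd(1) p1 up assms(3) c3(1) by simp
      next
        assume l: "lam = [2,2,0]"
        have "\<mu> \<in> S220" "\<nu> \<in> S220" using m n unfolding l Sn220 by auto
        then show ?thesis unfolding l using d220 c2 K1(2) cd(1) p1 up assms(3) c3(1) by simp
      next
        assume l: "lam = [2,1,0]"
        have "\<mu> \<in> S210" "\<nu> \<in> S210" using m n unfolding l Sn210 by auto
        then show ?thesis unfolding l using d210 K1(3,4) cd(1) p1 up assms(3) c3(1) by simp
      qed
    qed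
  next
    assume H: "\<forall>lam. is_partition 3 lam \<and> (\<forall>x\<in>set lam. x \<le> 2) \<and> length (filter (\<lambda>x. x \<noteq> 0) lam) = 2 \<longrightarrow>
       (\<forall>\<mu>\<in>S_n lam. \<forall>\<nu>\<in>S_n lam. Pr lam \<mu> / Pr lam \<nu> = Pd \<mu> / Pd \<nu>)"
    have "Pr [2,1,0] [2,1,0] / Pr [2,1,0] [2,0,1] = Pd [2,1,0] / Pd [2,0,1]"
    proof -
      have mem: "[2,1,0] \<in> S_n [2,1,0]" "[2,0,1] \<in> S_n [2,1,0]" unfolding Sn210 S210_def by simp_all
      have cond: "is_partition 3 [2,1,0] \<and> (\<forall>x\<in>set [2,1,0]. x \<le> (2::nat)) \<and> length (filter (\<lambda>x. x \<noteq> 0) [2,1,0::nat]) = 2"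
        by (simp add: is_partition_def)
      show ?thesis using H cond mem by blast
    qed
    then have "(c3 * (t+2)) / (c3 * (2*t+1)) = (cd * (u*(2*t+5+u))) / (cd * (u*(4*t+3+u)))"
      using rA dA by simp
    then have "(t+2) / (2*t+1) = (2*t+5+u) / (4*t+3+u)"
      using c3(1) cd(1) assms(3) by simp
    then have "(t+2) * (4*t+3+u) = (2*t+5+u) * (2*t+1)"
      using p1 by (simp add: field_simps)
    moreover have "(t+2) * (4*t+3+u) - (2*t+5+u) * (2*t+1) = (1 - t) * (1 + u)" by algebra
    ultimately have "(t - 1) * (1 + u) = 0" by (simp add: algebra_simps)
    then show "t = 1" using assms(3) by simp
  qed
qed


end
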